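(* Let $G$ be a finite simple graph with maximum degree $\Delta$. If the induced subgraph $G[\mathrm{core}(G)]$ has a proper $\Delta$-edge coloring, then $G$ has a matching that saturates every vertex of $\mathrm{core}(G)$.
   Context: $\mathrm{core}(G)$ is the set of vertices of $G$ of degree $\Delta$. A proper $\Delta$-edge coloring assigns one of $\Delta$ colors to each edge so that adjacent edges get different colors. *)

theory Defs
  imports Main
begin

definition simple_graph :: "'a set \<Rightarrow> 'a set set \<Rightarrow> bool" where
  "simple_graph V E \<longleftrightarrow> finite V \<and> (\<forall>e\<in>E. \<exists>u v. e = {u, v} \<and> u \<noteq> v \<and> u \<in> V \<and> v \<in> V)"

definition degree :: "'a set set \<Rightarrow> 'a \<Rightarrow> nat" where
  "degree E v = card {e\<in>E. v \<in> e}"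

definition max_degree :: "'a set \<Rightarrow> 'a set set \<Rightarrow> nat" where
  "max_degree V E = Max (degree E ` V)"

definition core :: "'a set \<Rightarrow> 'a set set \<Rightarrow> 'a set" where
  "core V E = {v\<in>V. degree E v = max_degree V E}"

definition induced_edges :: "'a set set \<Rightarrow> 'a set \<Rightarrow> 'a set set" where
  "induced_edges E S = {e\<in>E. e \<subseteq> S}"

definition proper_edge_coloring :: "'a set set \<Rightarrow> nat \<Rightarrow> ('a set \<Rightarrow> nat) \<Rightarrow> bool" where
  "proper_edge_coloring E k c \<longleftrightarrow>
     (\<forall>e\<in>E. c e < k) \<and>
     (\<forall>e\<in>E. \<forall>f\<in>E. e \<noteq> f \<and> e \<inter> f \<noteq> {} \<longrightarrow> c e \<noteq> c f)"

definition matching :: "'a set set \<Rightarrow> 'a set set \<Rightarrow> bool" where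
  "matching E M \<longleftrightarrow> M \<subseteq> E \<and> (\<forall>e\<in>M. \<forall>f\<in>M. e \<noteq> f \<longrightarrow> e \<inter> f = {})"

definition saturates :: "'a set set \<Rightarrow> 'a set \<Rightarrow> bool" where
  "saturates M S \<longleftrightarrow> (\<forall>v\<in>S. \<exists>e\<in>M. v \<in> e)"

end

theory Submission
  imports Defs
begin

definition adjW :: "'a set set \<Rightarrow> 'a set \<Rightarrow> ('a \<times> 'a) set" where
  "adjW E W = {(u,v). u \<in> W \<and> v \<in> W \<and> {u,v} \<in> E}"

definition compW :: "'a set set \<Rightarrow> 'a set \<Rightarrow> 'a \<Rightarrow> 'a set" where
  "compW E W v = {u. (v,u) \<in> (adjW E W)\<^sup>*}"

definition comps :: "'a set set \<Rightarrow> 'a set \<Rightarrow> 'a set set" where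
  "comps E W = compW E W ` W"

definition oddS :: "'a set set \<Rightarrow> 'a set \<Rightarrow> 'a set \<Rightarrow> nat" where
  "oddS E W S = card {K \<in> comps E W. odd (card K) \<and> K \<subseteq> S}"

lemma adjW_sym: "(u,v) \<in> adjW E W \<Longrightarrow> (v,u) \<in> adjW E W"
  unfolding adjW_def by (simp add: insert_commute)

lemma adjW_conv: "(adjW E W)\<inverse> = adjW E W"
  using adjW_sym by fast

lemma rt_sym: "(u,v) \<in> (adjW E W)\<^sup>* \<Longrightarrow> (v,u) \<in> (adjW E W)\<^sup>*"
  by (metis adjW_conv rtrancl_converseI)

lemma rt_in: "(u,v) \<in> (adjW E W)\<^sup>* \<Longrightarrow> u \<in> W \<Longrightarrow> v \<in> W"
  by (induction rule: rtrancl_induct) (auto simp: adjW_def)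

lemma compW_sub: "v \<in> W \<Longrightarrow> compW E W v \<subseteq> W"
  using rt_in by (auto simp: compW_def)

lemma compW_self: "v \<in> compW E W v"
  by (auto simp: compW_def)

lemma compW_eq: "u \<in> compW E W v \<Longrightarrow> compW E W u = compW E W v"
proof -
  assume "u \<in> compW E W v"
  then have vu: "(v,u) \<in> (adjW E W)\<^sup>*" by (simp add: compW_def)
  then have uv: "(u,v) \<in> (adjW E W)\<^sup>*" by (rule rt_sym)
  show ?thesis
  proof (intro set_eqI iffI)
    fix x assume "x \<in> compW E W u"
    then show "x \<in> compW E W v" using vu unfolding compW_def by (simp add: rtrancl_trans[OF vu])
  next
    fix x assume "x \<in> compW E W v"
    then show "x \<in> compW E W u" using uv unfolding compW_def by (simp add: rtrancl_trans[OF uv])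
  qed
qed

lemma compW_closed: "x \<in> compW E W v \<Longrightarrow> (x,y) \<in> adjW E W \<Longrightarrow> y \<in> compW E W v"
  unfolding compW_def by (auto intro: rtrancl_into_rtrancl)

lemma compW_mono: "W1 \<subseteq> W2 \<Longrightarrow> compW E W1 v \<subseteq> compW E W2 v"
proof -
  assume "W1 \<subseteq> W2"
  then have "adjW E W1 \<subseteq> adjW E W2" by (auto simp: adjW_def)
  then show ?thesis unfolding compW_def using rtrancl_mono by blast
qed

lemma closure_lemma:
  assumes "(u,v) \<in> (adjW E W')\<^sup>*" "W' \<subseteq> W" "u \<in> A"
    "\<forall>x\<in>A. \<forall>y. (x,y) \<in> adjW E W \<longrightarrow> y \<in> A"
  shows "v \<in> A \<and> (u,v) \<in> (adjW E (W' \<inter> A))\<^sup>*"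
  using assms(1)
proof (induction rule: rtrancl_induct)
  case base
  then show ?case using assms by auto
next
  case (step y z)
  then have "y \<in> A" by auto
  have "(y,z) \<in> adjW E W" using step(2) assms(2) by (auto simp: adjW_def)
  then have "z \<in> A" using assms(4) \<open>y \<in> A\<close> by blast
  have "(y,z) \<in> adjW E (W' \<inter> A)" using step(2) \<open>y \<in> A\<close> \<open>z \<in> A\<close> by (auto simp: adjW_def)
  then show ?case using step \<open>z \<in> A\<close> by (meson rtrancl.rtrancl_into_rtrancl)
qed

lemma comps_sub: "K \<in> comps E W \<Longrightarrow> K \<subseteq> W"
  by (auto simp: comps_def dest: compW_sub)

lemma comps_ne: "K \<in> comps E W \<Longrightarrow> K \<noteq> {}"
  using compW_self by (fastforce simp: comps_def)

lemma comps_disj: "K1 \<in> comps E W \<Longrightarrow> K2 \<in> comps E W \<Longrightarrow> K1 \<noteq> K2 \<Longrightarrow> K1 \<inter> K2 = {}"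
proof (rule ccontr)
  assume a: "K1 \<in> comps E W" "K2 \<in> comps E W" "K1 \<noteq> K2" "K1 \<inter> K2 \<noteq> {}"
  then obtain x where x: "x \<in> K1" "x \<in> K2" by blast
  obtain v1 where v1: "K1 = compW E W v1" using a(1) unfolding comps_def by blast
  obtain v2 where v2: "K2 = compW E W v2" using a(2) unfolding comps_def by blast
  have "compW E W x = K1" using x(1) v1 compW_eq by metis
  moreover have "compW E W x = K2" using x(2) v2 compW_eq by metis
  ultimately show False using a(3) by simp
qed

lemma comps_Union: "\<Union>(comps E W) = W"
proof
  show "\<Union>(comps E W) \<subseteq> W" using comps_sub by (intro Union_least)
  show "W \<subseteq> \<Union>(comps E W)"
  proof
    fix x assume "x \<in> W"
    then have "compW E W x \<in> comps E W" "x \<in> compW E W x" by (auto simp: comps_def compW_self)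
    then show "x \<in> \<Union>(comps E W)" by (rule UnionI)
  qed
qed

lemma comps_finite: "finite W \<Longrightarrow> finite (comps E W)"
  unfolding comps_def by (rule finite_imageI)

lemma comps_closed: "K \<in> comps E W \<Longrightarrow> x \<in> K \<Longrightarrow> (x,y) \<in> adjW E W \<Longrightarrow> y \<in> K"
proof -
  assume a: "K \<in> comps E W" "x \<in> K" "(x,y) \<in> adjW E W"
  then obtain v where "K = compW E W v" unfolding comps_def by blast
  then show "y \<in> K" using a compW_closed by metis
qed

lemma comps_of: "K \<in> comps E W \<Longrightarrow> x \<in> K \<Longrightarrow> K = compW E W x"
proof -
  assume a: "K \<in> comps E W" "x \<in> K"
  then obtain v where "K = compW E W v" unfolding comps_def by blast
  then show ?thesis using a compW_eq by metis
qed

lemma comps_I: "x \<in> W \<Longrightarrow> compW E W x \<in> comps E W"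
  by (simp add: comps_def)

lemma comp_split_out:
  assumes D: "D \<in> comps E W" and T: "T \<subseteq> D" and u: "u \<in> W" "u \<notin> D"
  shows "compW E (W - T) u = compW E W u"
proof
  let ?K = "compW E W u"
  have Kc: "\<forall>x\<in>?K. \<forall>y. (x,y) \<in> adjW E W \<longrightarrow> y \<in> ?K" using compW_closed by metis
  have KD: "?K \<inter> D = {}"
    using comps_disj[OF comps_I[OF u(1)] D] compW_self u(2) by metis
  show "compW E (W - T) u \<subseteq> ?K" using compW_mono[of "W - T" W E u] by blast
  show "?K \<subseteq> compW E (W - T) u"
  proof
    fix v assume "v \<in> ?K"
    then have "(u,v) \<in> (adjW E W)\<^sup>*" by (simp add: compW_def)
    from closure_lemma[OF this order_refl compW_self Kc]
    have "(u,v) \<in> (adjW E (W \<inter> ?K))\<^sup>*" by blast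
    moreover have "W \<inter> ?K \<subseteq> W - T" using KD T by blast
    ultimately have "v \<in> compW E (W \<inter> ?K) u" by (simp add: compW_def)
    moreover have "compW E (W \<inter> ?K) u \<subseteq> compW E (W - T) u"
      by (rule compW_mono[OF \<open>W \<inter> ?K \<subseteq> W - T\<close>])
    ultimately show "v \<in> compW E (W - T) u" by blast
  qed
qed

lemma comp_split_in:
  assumes D: "D \<in> comps E W" and T: "T \<subseteq> D" and u: "u \<in> D"
  shows "compW E (W - T) u = compW E (D - T) u"
proof
  have DW: "D \<subseteq> W" using D comps_sub by blast
  have Dc: "\<forall>x\<in>D. \<forall>y. (x,y) \<in> adjW E W \<longrightarrow> y \<in> D" using comps_closed[OF D] by blast
  show "compW E (D - T) u \<subseteq> compW E (W - T) u" using DW by (intro compW_mono) blast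
  show "compW E (W - T) u \<subseteq> compW E (D - T) u"
  proof
    fix v assume "v \<in> compW E (W - T) u"
    then have "(u,v) \<in> (adjW E (W - T))\<^sup>*" by (simp add: compW_def)
    from closure_lemma[OF this _ u Dc]
    have "(u,v) \<in> (adjW E ((W - T) \<inter> D))\<^sup>*" by blast
    moreover have "(W - T) \<inter> D = D - T" using DW by blast
    ultimately show "v \<in> compW E (D - T) u" by (simp add: compW_def)
  qed
qed

lemma comps_split:
  assumes D: "D \<in> comps E W" and T: "T \<subseteq> D"
  shows "comps E (W - T) = (comps E W - {D}) \<union> comps E (D - T)"
proof -
  have DW: "D \<subseteq> W" using D comps_sub by blast
  have "comps E (W - T) = compW E (W - T) ` (W - D) \<union> compW E (W - T) ` (D - T)"
    unfolding comps_def using DW T by blast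
  also have "compW E (W - T) ` (W - D) = compW E W ` (W - D)"
    using comp_split_out[OF D T] by (intro image_cong) auto
  also have "compW E (W - T) ` (D - T) = compW E (D - T) ` (D - T)"
    using comp_split_in[OF D T] by (intro image_cong) auto
  also have "compW E (D - T) ` (D - T) = comps E (D - T)" by (simp add: comps_def)
  also have "compW E W ` (W - D) = comps E W - {D}"
  proof
    show "compW E W ` (W - D) \<subseteq> comps E W - {D}"
    proof
      fix K assume "K \<in> compW E W ` (W - D)"
      then obtain x where x: "x \<in> W" "x \<notin> D" "K = compW E W x" by blast
      then have "K \<in> comps E W" by (simp add: comps_I)
      moreover have "K \<noteq> D" using x compW_self by metis
      ultimately show "K \<in> comps E W - {D}" by blast
    qed
    show "comps E W - {D} \<subseteq> compW E W ` (W - D)"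
    proof
      fix K assume K: "K \<in> comps E W - {D}"
      then obtain x where x: "x \<in> W" "K = compW E W x" unfolding comps_def by blast
      have "x \<notin> D"
      proof
        assume "x \<in> D"
        then have "D = compW E W x" using comps_of[OF D] by blast
        then show False using K x by blast
      qed
      then show "K \<in> compW E W ` (W - D)" using x by blast
    qed
  qed
  finally show ?thesis .
qed

lemma comps_keep:
  assumes D: "D \<in> comps E (W - X)" and Y: "Y \<subseteq> X"
    and nb: "\<forall>u\<in>D. \<forall>x\<in>X. {x,u} \<in> E \<longrightarrow> x \<in> Y"
  shows "D \<in> comps E (W - Y)"
proof -
  obtain d where d: "d \<in> D" using comps_ne[OF D] by blast
  have DW: "D \<subseteq> W - X" using D comps_sub by blast
  have Dc: "\<forall>x\<in>D. \<forall>y. (x,y) \<in> adjW E (W - Y) \<longrightarrow> y \<in> D"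
  proof (intro ballI allI impI)
    fix x y assume xy: "x \<in> D" "(x,y) \<in> adjW E (W - Y)"
    then have y: "y \<in> W" "y \<notin> Y" "{x,y} \<in> E" and xW: "x \<in> W" by (auto simp: adjW_def)
    have "y \<notin> X"
    proof
      assume "y \<in> X"
      moreover have "{y,x} \<in> E" using y(3) by (simp add: insert_commute)
      ultimately have "y \<in> Y" using nb xy(1) by blast
      then show False using y(2) by blast
    qed
    then have "(x,y) \<in> adjW E (W - X)" using y xy(1) DW unfolding adjW_def by blast
    then show "y \<in> D" using comps_closed[OF D xy(1)] by blast
  qed
  have "compW E (W - Y) d = D"
  proof
    show "D \<subseteq> compW E (W - Y) d"
      using comps_of[OF D d] compW_mono[of "W - X" "W - Y" E d] Y by blast
    show "compW E (W - Y) d \<subseteq> D"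
    proof
      fix v assume "v \<in> compW E (W - Y) d"
      then have "(d,v) \<in> (adjW E (W - Y))\<^sup>*" by (simp add: compW_def)
      from closure_lemma[OF this order_refl d Dc] show "v \<in> D" by blast
    qed
  qed
  moreover have "d \<in> W - Y" using d DW Y by blast
  ultimately show ?thesis using comps_I by metis
qed

lemma oddS_split:
  assumes D: "D \<in> comps E W" and T: "T \<subseteq> D" and fin: "finite W"
  shows "oddS E (W - T) S + (if odd (card D) \<and> D \<subseteq> S then 1 else 0)
         = oddS E W S + oddS E (D - T) S"
proof -
  let ?P = "\<lambda>K. odd (card K) \<and> K \<subseteq> S"
  have DW: "D \<subseteq> W" using D comps_sub by blast
  have f1: "finite (comps E W)" using fin comps_finite by blast
  have f2: "finite (comps E (D - T))" using fin DW comps_finite finite_subset by (metis Diff_subset)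
  have eq: "{K \<in> comps E (W - T). ?P K} = {K \<in> comps E W - {D}. ?P K} \<union> {K \<in> comps E (D - T). ?P K}"
    using comps_split[OF D T] by blast
  have disj: "{K \<in> comps E W - {D}. ?P K} \<inter> {K \<in> comps E (D - T). ?P K} = {}"
  proof (rule ccontr)
    assume "{K \<in> comps E W - {D}. ?P K} \<inter> {K \<in> comps E (D - T). ?P K} \<noteq> {}"
    then obtain K where K: "K \<in> comps E W" "K \<noteq> D" "K \<in> comps E (D - T)" by blast
    have "K \<inter> D = {}" using comps_disj[OF K(1) D K(2)] .
    moreover have "K \<subseteq> D" "K \<noteq> {}" using comps_sub[OF K(3)] comps_ne[OF K(3)] by blast+
    ultimately show False by blast
  qed
  have "oddS E (W - T) S = card {K \<in> comps E W - {D}. ?P K} + card {K \<in> comps E (D - T). ?P K}"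
    unfolding oddS_def eq using disj f1 f2 by (intro card_Un_disjoint) auto
  moreover have "card {K \<in> comps E W - {D}. ?P K} + (if ?P D then 1 else 0) = oddS E W S"
  proof (cases "?P D")
    case True
    then have "{K \<in> comps E W. ?P K} = insert D {K \<in> comps E W - {D}. ?P K}" using D by blast
    then show ?thesis unfolding oddS_def using True f1 by simp
  next
    case False
    then have "{K \<in> comps E W. ?P K} = {K \<in> comps E W - {D}. ?P K}" by blast
    then show ?thesis unfolding oddS_def using False by simp
  qed
  ultimately show ?thesis unfolding oddS_def by simp
qed

lemma even_sum_odd_count:
  "finite F \<Longrightarrow> even (\<Sum>K\<in>F. (f K::nat)) = even (card {K\<in>F. odd (f K)})"
proof (induction F rule: finite_induct)
  case empty
  then show ?case by simp
next
  case (insert x F)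
  have fin: "finite {K\<in>F. odd (f K)}" using insert(1) by simp
  have xn: "x \<notin> {K\<in>F. odd (f K)}" using insert(2) by simp
  have s: "(\<Sum>K\<in>insert x F. f K) = f x + (\<Sum>K\<in>F. f K)" using insert(1,2) by simp
  show ?case
  proof (cases "odd (f x)")
    case True
    then have "{K \<in> insert x F. odd (f K)} = insert x {K\<in>F. odd (f K)}" by blast
    then have "card {K \<in> insert x F. odd (f K)} = Suc (card {K\<in>F. odd (f K)})"
      using fin xn by simp
    then show ?thesis using s insert(3) True by simp
  next
    case False
    then have "{K \<in> insert x F. odd (f K)} = {K\<in>F. odd (f K)}" by blast
    then show ?thesis using s insert(3) False by simp
  qed
qed

lemma comps_card_sum:
  assumes "finite W" shows "card W = (\<Sum>K\<in>comps E W. card K)"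
proof -
  have "card (\<Union>(comps E W)) = (\<Sum>K\<in>comps E W. card K)"
  proof (rule card_Union_disjoint)
    show "pairwise disjnt (comps E W)" unfolding pairwise_def disjnt_def using comps_disj by blast
    show "\<And>K. K \<in> comps E W \<Longrightarrow> finite K" using assms comps_sub rev_finite_subset by metis
  qed
  then show ?thesis by (simp add: comps_Union)
qed

lemma parity_comps:
  assumes "finite W" shows "even (card W) = even (card {K \<in> comps E W. odd (card K)})"
  by (subst comps_card_sum[OF assms]) (rule even_sum_odd_count[OF comps_finite[OF assms]])

lemma hall:
  fixes A :: "'i \<Rightarrow> 'b set"
  assumes "finite I" "\<forall>i\<in>I. finite (A i)" "\<forall>J\<subseteq>I. card J \<le> card (\<Union>(A ` J))"
  shows "\<exists>f. inj_on f I \<and> (\<forall>i\<in>I. f i \<in> A i)"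
  using assms
proof (induction "card I" arbitrary: I A rule: less_induct)
  case less
  note fin = less.prems(1) and finA = less.prems(2) and H = less.prems(3)
  show ?case
  proof (cases "I = {}")
    case True
    then show ?thesis by simp
  next
    case Ine: False
    have finU: "\<And>J. J \<subseteq> I \<Longrightarrow> finite (\<Union>(A ` J))"
    proof -
      fix J assume J: "J \<subseteq> I"
      have "finite J" using rev_finite_subset[OF fin J] .
      moreover have "\<And>i. i \<in> J \<Longrightarrow> finite (A i)" using finA J by blast
      ultimately show "finite (\<Union>(A ` J))" by (rule finite_UN_I)
    qed
    show ?thesis
    proof (cases "\<exists>J. J \<subseteq> I \<and> J \<noteq> {} \<and> J \<noteq> I \<and> card (\<Union>(A ` J)) \<le> card J")
      case True
      then obtain J where J: "J \<subseteq> I" "J \<noteq> {}" "J \<noteq> I" "card (\<Union>(A ` J)) \<le> card J" by blast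
      have finJ: "finite J" using J(1) fin rev_finite_subset by metis
      have "card J < card I" using J(1,3) fin by (meson psubsetI psubset_card_mono)
      moreover have "\<forall>i\<in>J. finite (A i)" using finA J(1) by blast
      moreover have "\<forall>K\<subseteq>J. card K \<le> card (\<Union>(A ` K))" using H J(1) by (meson subset_trans)
      note IH1 = less.hyps[OF calculation(1) finJ calculation(2) this]
      then obtain f1 where f1: "inj_on f1 J" "\<forall>i\<in>J. f1 i \<in> A i" by blast
      define U where "U = \<Union>(A ` J)"
      define A2 where "A2 = (\<lambda>i. A i - U)"
      have finIJ: "finite (I - J)" using fin by simp
      have "card (I - J) = card I - card J" using finJ J(1) by (rule card_Diff_subset)
      moreover have "0 < card J" using finJ J(2) by (simp add: card_gt_0_iff)
      moreover have "card J \<le> card I" using fin J(1) by (rule card_mono)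
      ultimately have c2: "card (I - J) < card I" by linarith
      have finU2: "finite U" unfolding U_def using finU J(1) by blast
      have H2: "\<forall>K\<subseteq>I - J. card K \<le> card (\<Union>(A2 ` K))"
      proof (intro allI impI)
        fix K assume K: "K \<subseteq> I - J"
        have finK: "finite K" using K finIJ rev_finite_subset by metis
        have u: "\<Union>(A ` (K \<union> J)) = \<Union>(A2 ` K) \<union> U"
        proof
          show "\<Union>(A ` (K \<union> J)) \<subseteq> \<Union>(A2 ` K) \<union> U" unfolding A2_def U_def by blast
          show "\<Union>(A2 ` K) \<union> U \<subseteq> \<Union>(A ` (K \<union> J))" unfolding A2_def U_def by blast
        qed
        have d: "\<Union>(A2 ` K) \<inter> U = {}" unfolding A2_def by blast
        have fK2: "finite (\<Union>(A2 ` K))"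
        proof (rule rev_finite_subset)
          show "finite (\<Union>(A ` K))" using finU K by blast
          show "\<Union>(A2 ` K) \<subseteq> \<Union>(A ` K)" unfolding A2_def by blast
        qed
        have "card (K \<union> J) = card K + card J" using K finK finJ by (intro card_Un_disjoint) auto
        moreover have "K \<union> J \<subseteq> I" using K J(1) by blast
        then have "card (K \<union> J) \<le> card (\<Union>(A ` (K \<union> J)))" using H by blast
        moreover have "card (\<Union>(A ` (K \<union> J))) = card (\<Union>(A2 ` K)) + card U"
          unfolding u using d fK2 finU2 by (intro card_Un_disjoint) auto
        moreover have "card U \<le> card J" using J(4) unfolding U_def .
        ultimately show "card K \<le> card (\<Union>(A2 ` K))" by linarith
      qed
      have fA2: "\<forall>i\<in>I - J. finite (A2 i)" using finA unfolding A2_def by blast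
      obtain f2 where f2: "inj_on f2 (I - J)" "\<forall>i\<in>I - J. f2 i \<in> A2 i"
        using less.hyps[OF c2 finIJ fA2 H2] by blast
      define f where "f = (\<lambda>i. if i \<in> J then f1 i else f2 i)"
      have "inj_on f I"
      proof (rule inj_onI)
        fix x y assume xy: "x \<in> I" "y \<in> I" "f x = f y"
        show "x = y"
        proof (cases "x \<in> J"; cases "y \<in> J")
          assume "x \<in> J" "y \<in> J" then show ?thesis using xy f1(1) unfolding f_def by (simp add: inj_on_def)
        next
          assume a: "x \<in> J" "y \<notin> J"
          then have "f x \<in> U" using f1(2) unfolding f_def U_def by auto
          moreover have "f y \<notin> U" using a f2(2) xy(2) unfolding f_def A2_def by auto
          ultimately show ?thesis using xy(3) by simp
        next
          assume a: "x \<notin> J" "y \<in> J"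
          then have "f y \<in> U" using f1(2) unfolding f_def U_def by auto
          moreover have "f x \<notin> U" using a f2(2) xy(1) unfolding f_def A2_def by auto
          ultimately show ?thesis using xy(3) by simp
        next
          assume "x \<notin> J" "y \<notin> J" then show ?thesis using xy f2(1) unfolding f_def by (simp add: inj_on_def)
        qed
      qed
      moreover have "\<forall>i\<in>I. f i \<in> A i" using f1(2) f2(2) unfolding f_def A2_def by auto
      ultimately show ?thesis by blast
    next
      case False
      have big: "\<And>J. J \<subseteq> I \<Longrightarrow> J \<noteq> {} \<Longrightarrow> J \<noteq> I \<Longrightarrow> card J < card (\<Union>(A ` J))"
      proof -
        fix J assume "J \<subseteq> I" "J \<noteq> {}" "J \<noteq> I"
        then have "\<not> card (\<Union>(A ` J)) \<le> card J" using False by blast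
        then show "card J < card (\<Union>(A ` J))" by simp
      qed
      obtain i0 where i0: "i0 \<in> I" using Ine by blast
      have "card {i0} \<le> card (\<Union>(A ` {i0}))" using H i0 by blast
      then have "1 \<le> card (A i0)" by simp
      then have "A i0 \<noteq> {}" by auto
      then obtain a where a: "a \<in> A i0" by blast
      define A2 where "A2 = (\<lambda>i. A i - {a})"
      have finI2: "finite (I - {i0})" using fin by simp
      have c2: "card (I - {i0}) < card I" using fin i0 by (rule card_Diff1_less)
      have H2: "\<forall>K\<subseteq>I - {i0}. card K \<le> card (\<Union>(A2 ` K))"
      proof (intro allI impI)
        fix K assume K: "K \<subseteq> I - {i0}"
        show "card K \<le> card (\<Union>(A2 ` K))"
        proof (cases "K = {}")
          case True then show ?thesis by simp
        next
          case False
          have KI1: "K \<subseteq> I" using K by blast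
          have KI2: "K \<noteq> I" using K i0 by blast
          note KI = KI1 KI2
          have lt: "card K < card (\<Union>(A ` K))" using big[OF KI(1) False KI(2)] .
          have e: "\<Union>(A2 ` K) = \<Union>(A ` K) - {a}" unfolding A2_def by blast
          have "card (\<Union>(A ` K)) - 1 \<le> card (\<Union>(A ` K) - {a})"
            by (simp add: card_Diff_singleton_if)
          then show ?thesis unfolding e using lt by linarith
        qed
      qed
      have fA2: "\<forall>i\<in>I - {i0}. finite (A2 i)" using finA unfolding A2_def by blast
      obtain f2 where f2: "inj_on f2 (I - {i0})" "\<forall>i\<in>I - {i0}. f2 i \<in> A2 i"
        using less.hyps[OF c2 finI2 fA2 H2] by blast
      define f where "f = f2(i0 := a)"
      have "inj_on f I"
      proof (rule inj_onI)
        fix x y assume xy: "x \<in> I" "y \<in> I" "f x = f y"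
        show "x = y"
        proof (cases "x = i0"; cases "y = i0")
          assume "x = i0" "y = i0" then show ?thesis by simp
        next
          assume b: "x = i0" "y \<noteq> i0"
          then have "f y \<noteq> a" using f2(2) xy(2) unfolding f_def A2_def by auto
          then show ?thesis using b xy(3) unfolding f_def by simp
        next
          assume b: "x \<noteq> i0" "y = i0"
          then have "f x \<noteq> a" using f2(2) xy(1) unfolding f_def A2_def by auto
          then show ?thesis using b xy(3) unfolding f_def by simp
        next
          assume "x \<noteq> i0" "y \<noteq> i0" then show ?thesis using xy f2(1) unfolding f_def by (simp add: inj_on_def)
        qed
      qed
      moreover have "\<forall>i\<in>I. f i \<in> A i" using f2(2) a unfolding f_def A2_def by auto
      ultimately show ?thesis by blast
    qed
  qed
qed

definition goodM :: "'a set set \<Rightarrow> 'a set \<Rightarrow> 'a set \<Rightarrow> 'a set set \<Rightarrow> bool" where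
  "goodM E W S M \<longleftrightarrow> M \<subseteq> E \<and> (\<forall>e\<in>M. e \<subseteq> W) \<and> (\<forall>e\<in>M. \<forall>f\<in>M. e \<noteq> f \<longrightarrow> e \<inter> f = {})
      \<and> (\<forall>v\<in>S. \<exists>e\<in>M. v \<in> e)"

lemma goodM_E: "goodM E W S M \<Longrightarrow> e \<in> M \<Longrightarrow> e \<in> E"
  unfolding goodM_def by (elim conjE) (rule subsetD)
lemma goodM_sub: "goodM E W S M \<Longrightarrow> e \<in> M \<Longrightarrow> e \<subseteq> W"
  unfolding goodM_def by (elim conjE) (erule bspec)
lemma goodM_disj: "goodM E W S M \<Longrightarrow> e \<in> M \<Longrightarrow> f \<in> M \<Longrightarrow> e \<noteq> f \<Longrightarrow> e \<inter> f = {}"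
  unfolding goodM_def by (elim conjE) simp
lemma goodM_cov: "goodM E W S M \<Longrightarrow> v \<in> S \<Longrightarrow> \<exists>e\<in>M. v \<in> e"
  unfolding goodM_def by (elim conjE) simp
lemma goodM_I:
  assumes "\<And>e. e \<in> M \<Longrightarrow> e \<in> E" "\<And>e. e \<in> M \<Longrightarrow> e \<subseteq> W"
    "\<And>e f. e \<in> M \<Longrightarrow> f \<in> M \<Longrightarrow> e \<noteq> f \<Longrightarrow> e \<inter> f = {}"
    "\<And>v. v \<in> S \<Longrightarrow> \<exists>e\<in>M. v \<in> e"
  shows "goodM E W S M"
  unfolding goodM_def
proof (intro conjI)
  show "M \<subseteq> E" using assms(1) by blast
  show "\<forall>e\<in>M. e \<subseteq> W" using assms(2) by blast
  show "\<forall>e\<in>M. \<forall>f\<in>M. e \<noteq> f \<longrightarrow> e \<inter> f = {}" using assms(3) by blast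
  show "\<forall>v\<in>S. \<exists>e\<in>M. v \<in> e" using assms(4) by blast
qed

lemma oddS_restrict: "W' \<subseteq> D \<Longrightarrow> oddS E W' (S \<inter> D) = oddS E W' S"
proof -
  assume a: "W' \<subseteq> D"
  have "{K \<in> comps E W'. odd (card K) \<and> K \<subseteq> S \<inter> D} = {K \<in> comps E W'. odd (card K) \<and> K \<subseteq> S}"
    using comps_sub a by blast
  then show ?thesis unfolding oddS_def by simp
qed

lemma oddS_all: "W' \<subseteq> S \<Longrightarrow> oddS E W' S = card {K \<in> comps E W'. odd (card K)}"
proof -
  assume a: "W' \<subseteq> S"
  have "{K \<in> comps E W'. odd (card K) \<and> K \<subseteq> S} = {K \<in> comps E W'. odd (card K)}"
    using comps_sub a by blast
  then show ?thesis unfolding oddS_def by simp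
qed

lemma tutteS:
  assumes "finite W" "S \<subseteq> W" "\<forall>X\<subseteq>W. oddS E (W - X) S \<le> card X"
  shows "\<exists>M. goodM E W S M"
  using assms
proof (induction "card W" arbitrary: W S rule: less_induct)
  case less
  note finW = less.prems(1) and SW = less.prems(2) and H = less.prems(3)
  define tight where "tight = {X. X \<subseteq> W \<and> oddS E (W - X) S = card X}"
  have o0: "oddS E W S = 0" using H[rule_format, OF empty_subsetI] by simp
  have t0: "{} \<in> tight" unfolding tight_def mem_Collect_eq using o0 by simp
  have ftight: "finite tight"
  proof (rule finite_subset)
    show "tight \<subseteq> Pow W" unfolding tight_def by blast
    show "finite (Pow W)" using finW by simp
  qed
  have "Max (card ` tight) \<in> card ` tight" using ftight t0 by (intro Max_in) auto
  then obtain X where X: "X \<in> tight" "card X = Max (card ` tight)" by auto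
  have Xmax: "\<And>Y. Y \<in> tight \<Longrightarrow> card Y \<le> card X" using X(2) ftight by simp
  have XW: "X \<subseteq> W" and Xt: "oddS E (W - X) S = card X" using X(1) unfolding tight_def by auto
  have finX: "finite X" using XW finW rev_finite_subset by metis
  show ?case
  proof (cases "X = {}")
    case True
    have notight: "\<And>Y. Y \<subseteq> W \<Longrightarrow> Y \<noteq> {} \<Longrightarrow> oddS E (W - Y) S < card Y"
    proof -
      fix Y assume Y: "Y \<subseteq> W" "Y \<noteq> {}"
      have "card Y > 0" using Y finW rev_finite_subset by (metis card_gt_0_iff)
      then have "Y \<notin> tight" using Xmax True by fastforce
      then have "oddS E (W - Y) S \<noteq> card Y" using Y unfolding tight_def by blast
      moreover have "oddS E (W - Y) S \<le> card Y" using H Y by blast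
      ultimately show "oddS E (W - Y) S < card Y" by simp
    qed
    show ?thesis
    proof (cases "W \<subseteq> S")
      case WS: True
      show ?thesis
      proof (cases "W = {}")
        case True
        then have "goodM E W S {}" unfolding goodM_def using SW by auto
        then show ?thesis by blast
      next
        case False
        then obtain v where v: "v \<in> W" by blast
        have "oddS E W S = 0" using Xt True by simp
        then have "{K \<in> comps E W. odd (card K) \<and> K \<subseteq> S} = {}"
          unfolding oddS_def using comps_finite[OF finW] by simp
        moreover have "\<And>K. K \<in> comps E W \<Longrightarrow> K \<subseteq> S" using comps_sub WS by blast
        ultimately have "{K \<in> comps E W. odd (card K)} = {}" by blast
        then have c0: "card {K \<in> comps E W. odd (card K)} = 0" by (simp only: card.empty)
        have evW: "even (card W)" using parity_comps[OF finW, of E] unfolding c0 by simp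
        have finW1: "finite (W - {v})" using finW by simp
        have cW: "card W > 0" using finW v card_gt_0_iff by blast
        have "card (W - {v}) = card W - 1" using v by (rule card_Diff_singleton)
        then have "odd (card (W - {v}))" using evW cW by presburger
        then have "odd (card {K \<in> comps E (W - {v}). odd (card K)})"
          using parity_comps[OF finW1, of E] by simp
        then have "card {K \<in> comps E (W - {v}). odd (card K)} \<noteq> 0" by presburger
        moreover have "{K \<in> comps E (W - {v}). odd (card K)} = {K \<in> comps E (W - {v}). odd (card K) \<and> K \<subseteq> S}"
          using comps_sub WS by blast
        ultimately have "oddS E (W - {v}) S \<ge> 1" unfolding oddS_def by simp
        moreover have "oddS E (W - {v}) S < card {v}" using notight v by blast
        ultimately show ?thesis by simp
      qed
    next
      case False
      then obtain t where t: "t \<in> W" "t \<notin> S" by blast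
      have c: "card (W - {t}) < card W" using finW t(1) by (rule card_Diff1_less)
      have f: "finite (W - {t})" using finW by simp
      have s: "S \<subseteq> W - {t}" using SW t by blast
      have h: "\<forall>Y\<subseteq>W - {t}. oddS E (W - {t} - Y) S \<le> card Y"
      proof (intro allI impI)
        fix Y assume Y: "Y \<subseteq> W - {t}"
        have "insert t Y \<subseteq> W" using Y t by blast
        then have "oddS E (W - insert t Y) S < card (insert t Y)" by (rule notight[OF _ insert_not_empty])
        moreover have "card (insert t Y) = Suc (card Y)"
        proof (rule card_insert_disjoint)
          have "Y \<subseteq> W" using Y by blast
          then show "finite Y" using finW by (rule finite_subset)
          show "t \<notin> Y" using Y by blast
        qed
        moreover have "W - {t} - Y = W - insert t Y" by blast
        ultimately show "oddS E (W - {t} - Y) S \<le> card Y" by simp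
      qed
      from less.hyps[OF c f s h] obtain M where M: "goodM E (W - {t}) S M" ..
      have M1: "M \<subseteq> E" "\<forall>e\<in>M. e \<subseteq> W - {t}" "\<forall>e\<in>M. \<forall>f\<in>M. e \<noteq> f \<longrightarrow> e \<inter> f = {}"
        "\<forall>v\<in>S. \<exists>e\<in>M. v \<in> e" using M unfolding goodM_def by simp_all
      have "\<forall>e\<in>M. e \<subseteq> W" using M1(2) by blast
      then have "goodM E W S M" using M1(1,3,4) unfolding goodM_def by simp
      then show ?thesis ..
    qed
  next
    case XNE: False
    define C where "C = comps E (W - X)"
    define I where "I = {K \<in> C. odd (card K) \<and> K \<subseteq> S}"
    have cardI: "card I = card X" using Xt unfolding oddS_def I_def C_def .
    have finWX: "finite (W - X)" using finW by simp
    have finC: "finite C" unfolding C_def using finWX by (rule comps_finite)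
    have IC: "I \<subseteq> C" unfolding I_def by blast
    have finI: "finite I" using finC IC by (rule rev_finite_subset)
    have CW: "\<And>D. D \<in> C \<Longrightarrow> D \<subseteq> W - X" unfolding C_def by (rule comps_sub)
    have Cne: "\<And>D. D \<in> C \<Longrightarrow> D \<noteq> {}" unfolding C_def by (rule comps_ne)
    have Cdisj: "\<And>D1 D2. D1 \<in> C \<Longrightarrow> D2 \<in> C \<Longrightarrow> D1 \<noteq> D2 \<Longrightarrow> D1 \<inter> D2 = {}"
      unfolding C_def by (rule comps_disj)
    have cardlt: "\<And>D. D \<in> C \<Longrightarrow> card D < card W"
    proof -
      fix D assume D: "D \<in> C"
      have "D \<subset> W" using CW[OF D] XNE XW by blast
      then show "card D < card W" by (rule psubset_card_mono[OF finW])
    qed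
    have finD: "\<And>D. D \<in> C \<Longrightarrow> finite D"
    proof -
      fix D assume D: "D \<in> C"
      have "D \<subseteq> W" using CW[OF D] by blast
      then show "finite D" using finW by (rule finite_subset)
    qed
    have partB: "\<forall>D\<in>C - I. \<exists>M. goodM E D (S \<inter> D) M"
    proof
      fix D assume D: "D \<in> C - I"
      have DC: "D \<in> C" using D by blast
      have nP: "\<not> (odd (card D) \<and> D \<subseteq> S)" using D unfolding I_def by blast
      have h: "\<forall>T\<subseteq>D. oddS E (D - T) (S \<inter> D) \<le> card T"
      proof (intro allI impI)
        fix T assume T: "T \<subseteq> D"
        have sp: "oddS E (W - X - T) S + (if odd (card D) \<and> D \<subseteq> S then 1 else 0)
            = oddS E (W - X) S + oddS E (D - T) S"
          using oddS_split[OF DC[unfolded C_def] T finWX] .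
        have we: "W - (X \<union> T) = W - X - T" by blast
        have sp2: "oddS E (W - (X \<union> T)) S = card X + oddS E (D - T) S"
          unfolding we using sp nP Xt by simp
        have XT: "X \<union> T \<subseteq> W" using XW T CW[OF DC] by blast
        have "oddS E (W - (X \<union> T)) S \<le> card (X \<union> T)" using H XT by blast
        moreover have "card (X \<union> T) = card X + card T"
        proof (rule card_Un_disjoint)
          show "finite X" by (rule finX)
          show "finite T" using T finD[OF DC] by (rule finite_subset)
          show "X \<inter> T = {}" using T CW[OF DC] by blast
        qed
        moreover have "oddS E (D - T) (S \<inter> D) = oddS E (D - T) S"
          by (rule oddS_restrict) blast
        ultimately show "oddS E (D - T) (S \<inter> D) \<le> card T" using sp2 by linarith
      qed
      have "S \<inter> D \<subseteq> D" by blast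
      from less.hyps[OF cardlt[OF DC] finD[OF DC] this h]
      show "\<exists>M. goodM E D (S \<inter> D) M" .
    qed
    have partA: "\<forall>D\<in>I. \<forall>v\<in>D. \<exists>M. goodM E (D - {v}) (D - {v}) M"
    proof (intro ballI)
      fix D v assume D: "D \<in> I" and v: "v \<in> D"
      have DC: "D \<in> C" using D IC by blast
      have oD: "odd (card D)" and DS: "D \<subseteq> S" using D unfolding I_def by blast+
      have h: "\<forall>T\<subseteq>D - {v}. oddS E (D - {v} - T) (D - {v}) \<le> card T"
      proof (intro allI impI)
        fix T assume T: "T \<subseteq> D - {v}"
        show "oddS E (D - {v} - T) (D - {v}) \<le> card T"
        proof (rule ccontr)
          assume gt0: "\<not> oddS E (D - {v} - T) (D - {v}) \<le> card T"
          define Q where "Q = D - insert v T"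
          have Qe: "D - {v} - T = Q" unfolding Q_def by blast
          have finQ: "finite Q" unfolding Q_def using finD[OF DC] by simp
          have vT: "insert v T \<subseteq> D" using T v by blast
          have finT: "finite T" using T finD[OF DC] by (meson Diff_subset finite_subset subset_trans)
          have vnT: "v \<notin> T" using T by blast
          define cnt where "cnt = card {K \<in> comps E Q. odd (card K)}"
          have o1: "oddS E (D - {v} - T) (D - {v}) = cnt"
            unfolding Qe cnt_def by (rule oddS_all) (unfold Q_def, blast)
          have o2: "oddS E Q S = cnt"
            unfolding cnt_def by (rule oddS_all) (unfold Q_def, use DS in blast)
          have cQ: "card Q = card D - Suc (card T)"
          proof -
            have "card Q = card D - card (insert v T)" unfolding Q_def
              using finD[OF DC] vT by (intro card_Diff_subset) (auto intro: finite_subset)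
            moreover have "card (insert v T) = Suc (card T)" using finT vnT by simp
            ultimately show ?thesis by simp
          qed
          have cle: "Suc (card T) \<le> card D" using vT finD[OF DC] card_mono finT vnT
            by (metis card_insert_disjoint)
          have par: "even (card Q) = even cnt" unfolding cnt_def by (rule parity_comps[OF finQ])
          have gt: "cnt > card T" using gt0 o1 by simp
          have big: "cnt \<ge> card T + 2" using par cQ cle oD gt by presburger
          have sp: "oddS E (W - X - insert v T) S + (if odd (card D) \<and> D \<subseteq> S then 1 else 0)
              = oddS E (W - X) S + oddS E (D - insert v T) S"
            using oddS_split[OF DC[unfolded C_def] vT finWX] .
          have we: "W - (X \<union> insert v T) = W - X - insert v T" by blast
          have sp2: "oddS E (W - (X \<union> insert v T)) S + 1 = card X + cnt"
            unfolding we using sp oD DS Xt o2 unfolding Q_def by simp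
          have XT: "X \<union> insert v T \<subseteq> W" using XW vT CW[OF DC] by blast
          have cXT: "card (X \<union> insert v T) = card X + Suc (card T)"
          proof -
            have "card (X \<union> insert v T) = card X + card (insert v T)"
            proof (rule card_Un_disjoint)
              show "finite X" by (rule finX)
              show "finite (insert v T)" using finT by simp
              show "X \<inter> insert v T = {}" using vT CW[OF DC] by blast
            qed
            then show ?thesis using finT vnT by simp
          qed
          have le: "oddS E (W - (X \<union> insert v T)) S \<le> card (X \<union> insert v T)" using H XT by blast
          then have eq: "oddS E (W - (X \<union> insert v T)) S = card (X \<union> insert v T)"
            using sp2 cXT big by linarith
          then have "X \<union> insert v T \<in> tight" unfolding tight_def using XT by blast
          then have "card (X \<union> insert v T) \<le> card X" by (rule Xmax)
          then show False using cXT by simp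
        qed
      qed
      have c: "card (D - {v}) < card W" using cardlt[OF DC] finD[OF DC] v
        by (meson Diff_subset card_mono le_less_trans)
      have f: "finite (D - {v})" using finD[OF DC] by simp
      from less.hyps[OF c f order_refl h]
      show "\<exists>M. goodM E (D - {v}) (D - {v}) M" .
    qed
    define Ad where "Ad = (\<lambda>D. {x \<in> X. \<exists>u\<in>D. {x,u} \<in> E})"
    have finAd: "\<forall>D\<in>I. finite (Ad D)" unfolding Ad_def using finX by simp
    have hallc: "\<forall>J\<subseteq>I. card J \<le> card (\<Union>(Ad ` J))"
    proof (intro allI impI)
      fix J assume J: "J \<subseteq> I"
      define Y where "Y = \<Union>(Ad ` J)"
      have YX: "Y \<subseteq> X" unfolding Y_def Ad_def by blast
      have YW: "Y \<subseteq> W" using YX XW by blast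
      have keep: "\<And>D. D \<in> J \<Longrightarrow> D \<in> comps E (W - Y)"
      proof -
        fix D assume DJ: "D \<in> J"
        have DC: "D \<in> comps E (W - X)" using DJ J IC unfolding C_def by blast
        have nb: "\<forall>u\<in>D. \<forall>x\<in>X. {x,u} \<in> E \<longrightarrow> x \<in> Y"
        proof (intro ballI impI)
          fix u x assume "u \<in> D" "x \<in> X" "{x,u} \<in> E"
          then have "x \<in> Ad D" unfolding Ad_def by blast
          then show "x \<in> Y" unfolding Y_def using DJ by blast
        qed
        show "D \<in> comps E (W - Y)" by (rule comps_keep[OF DC YX nb])
      qed
      have sub: "J \<subseteq> {K \<in> comps E (W - Y). odd (card K) \<and> K \<subseteq> S}"
      proof
        fix D assume DJ: "D \<in> J"
        have "odd (card D) \<and> D \<subseteq> S" using DJ J unfolding I_def by blast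
        then show "D \<in> {K \<in> comps E (W - Y). odd (card K) \<and> K \<subseteq> S}" using keep[OF DJ] by blast
      qed
      have finCY: "finite {K \<in> comps E (W - Y). odd (card K) \<and> K \<subseteq> S}"
        using comps_finite[of "W - Y" E] finW by simp
      have "card J \<le> oddS E (W - Y) S" unfolding oddS_def using finCY sub by (rule card_mono)
      also have "\<dots> \<le> card Y" using H YW by blast
      finally show "card J \<le> card (\<Union>(Ad ` J))" unfolding Y_def .
    qed
    obtain f where f: "inj_on f I" "\<forall>D\<in>I. f D \<in> Ad D"
      using hall[OF finI finAd hallc] by blast
    have fX: "f ` I \<subseteq> X" using f(2) unfolding Ad_def by blast
    have fI: "f ` I = X"
    proof (rule card_subset_eq[OF finX fX])
      show "card (f ` I) = card X" using card_image[OF f(1)] cardI by simp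
    qed
    have "\<forall>D\<in>I. \<exists>u. u \<in> D \<and> {f D, u} \<in> E" using f(2) unfolding Ad_def by blast
    from bchoice[OF this] obtain u where u: "\<forall>D\<in>I. u D \<in> D \<and> {f D, u D} \<in> E" by blast
    have "\<forall>D\<in>I. \<exists>M. goodM E (D - {u D}) (D - {u D}) M" using partA u by blast
    from bchoice[OF this] obtain MA where MA: "\<forall>D\<in>I. goodM E (D - {u D}) (D - {u D}) (MA D)" by blast
    from bchoice[OF partB] obtain MB where MB: "\<forall>D\<in>C - I. goodM E D (S \<inter> D) (MB D)" by blast
    define N where "N = (\<lambda>D. if D \<in> I then insert {f D, u D} (MA D) else MB D)"
    define R where "R = (\<lambda>D. D \<union> (if D \<in> I then {f D} else {}))"
    define M where "M = \<Union>(N ` C)"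
    have NR: "\<And>D e. D \<in> C \<Longrightarrow> e \<in> N D \<Longrightarrow> e \<subseteq> R D \<and> e \<in> E"
    proof -
      fix D e assume D: "D \<in> C" and e: "e \<in> N D"
      show "e \<subseteq> R D \<and> e \<in> E"
      proof (cases "D \<in> I")
        case True
        then have e2: "e = {f D, u D} \<or> e \<in> MA D" using e unfolding N_def by simp
        show ?thesis
        proof (cases "e = {f D, u D}")
          case True
          then show ?thesis using u \<open>D \<in> I\<close> unfolding R_def by simp
        next
          case False
          then have eM: "e \<in> MA D" using e2 by blast
          have "e \<subseteq> D - {u D}" using goodM_sub[OF MA[rule_format, OF \<open>D \<in> I\<close>] eM] .
          moreover have "e \<in> E" using goodM_E[OF MA[rule_format, OF \<open>D \<in> I\<close>] eM] .
          ultimately show ?thesis unfolding R_def by blast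
        qed
      next
        case False
        then have eM: "e \<in> MB D" using e unfolding N_def by simp
        have DI: "D \<in> C - I" using D False by blast
        have "e \<subseteq> D" using goodM_sub[OF MB[rule_format, OF DI] eM] .
        moreover have "e \<in> E" using goodM_E[OF MB[rule_format, OF DI] eM] .
        ultimately show ?thesis unfolding R_def by blast
      qed
    qed
    have RW: "\<And>D. D \<in> C \<Longrightarrow> R D \<subseteq> W"
    proof -
      fix D assume D: "D \<in> C"
      have "D \<subseteq> W" using CW[OF D] by blast
      moreover have "D \<in> I \<Longrightarrow> f D \<in> W" using fX XW by blast
      ultimately show "R D \<subseteq> W" unfolding R_def by auto
    qed
    have Rdisj: "\<And>D1 D2. D1 \<in> C \<Longrightarrow> D2 \<in> C \<Longrightarrow> D1 \<noteq> D2 \<Longrightarrow> R D1 \<inter> R D2 = {}"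
    proof -
      fix D1 D2 assume D: "D1 \<in> C" "D2 \<in> C" "D1 \<noteq> D2"
      have a: "D1 \<inter> D2 = {}" using Cdisj[OF D] .
      have b: "\<And>D D'. D \<in> C \<Longrightarrow> D' \<in> I \<Longrightarrow> f D' \<notin> D" using CW fX by blast
      have c: "D1 \<in> I \<Longrightarrow> D2 \<in> I \<Longrightarrow> f D1 \<noteq> f D2" using f(1) D(3) unfolding inj_on_def by blast
      show "R D1 \<inter> R D2 = {}" unfolding R_def using a b[OF D(1)] b[OF D(2)] c by auto
    qed
    have Ndisj: "\<And>D e e'. D \<in> C \<Longrightarrow> e \<in> N D \<Longrightarrow> e' \<in> N D \<Longrightarrow> e \<noteq> e' \<Longrightarrow> e \<inter> e' = {}"
    proof -
      fix D e e' assume D: "D \<in> C" and e: "e \<in> N D" "e' \<in> N D" "e \<noteq> e'"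
      show "e \<inter> e' = {}"
      proof (cases "D \<in> I")
        case False
        then have DI: "D \<in> C - I" using D by blast
        have "e \<in> MB D" "e' \<in> MB D" using e False unfolding N_def by simp_all
        then show ?thesis using goodM_disj[OF MB[rule_format, OF DI]] e(3) by blast
      next
        case True
        have gm: "goodM E (D - {u D}) (D - {u D}) (MA D)" using MA True by blast
        have fD: "f D \<notin> D" using CW[OF D] fX True by blast
        have sep: "\<And>g. g \<in> MA D \<Longrightarrow> {f D, u D} \<inter> g = {}"
        proof -
          fix g assume "g \<in> MA D"
          then have "g \<subseteq> D - {u D}" by (rule goodM_sub[OF gm])
          then show "{f D, u D} \<inter> g = {}" using fD by blast
        qed
        have e1: "e = {f D, u D} \<or> e \<in> MA D" and e2: "e' = {f D, u D} \<or> e' \<in> MA D"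
          using e True unfolding N_def by simp_all
        show ?thesis
        proof (cases "e \<in> MA D \<and> e' \<in> MA D")
          case True
          then show ?thesis using goodM_disj[OF gm] e(3) by blast
        next
          case False
          then show ?thesis using e1 e2 e(3) sep by blast
        qed
      qed
    qed
    have "goodM E W S M"
    proof (rule goodM_I)
      fix e assume "e \<in> M"
      then obtain D where D: "D \<in> C" "e \<in> N D" unfolding M_def by blast
      show "e \<in> E" using NR[OF D] by blast
    next
      fix e assume "e \<in> M"
      then obtain D where D: "D \<in> C" "e \<in> N D" unfolding M_def by blast
      show "e \<subseteq> W" using NR[OF D] RW[OF D(1)] by blast
    next
      fix e e' assume "e \<in> M" "e' \<in> M" and ne: "e \<noteq> e'"
      then obtain D D' where D: "D \<in> C" "e \<in> N D" and D': "D' \<in> C" "e' \<in> N D'"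
        unfolding M_def by blast
      show "e \<inter> e' = {}"
      proof (cases "D = D'")
        case True
        then show ?thesis using Ndisj[OF D(1) D(2)] D'(2) ne by blast
      next
        case False
        have "e \<subseteq> R D" "e' \<subseteq> R D'" using NR[OF D] NR[OF D'] by blast+
        then show ?thesis using Rdisj[OF D(1) D'(1) False] by blast
      qed
    next
      fix v assume vS: "v \<in> S"
      show "\<exists>e\<in>M. v \<in> e"
      proof (cases "v \<in> X")
        case True
        then obtain D where D: "D \<in> I" "v = f D" using fI by blast
        have "{f D, u D} \<in> N D" unfolding N_def using D by simp
        moreover have "D \<in> C" using D IC by blast
        ultimately have "{f D, u D} \<in> M" unfolding M_def by blast
        then show ?thesis using D by blast
      next
        case False
        then have vW: "v \<in> W - X" using vS SW by blast
        define D where "D = compW E (W - X) v"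
        have DC: "D \<in> C" unfolding C_def D_def using vW by (rule comps_I)
        have vD: "v \<in> D" unfolding D_def by (rule compW_self)
        have NM: "N D \<subseteq> M" unfolding M_def using DC by blast
        show ?thesis
        proof (cases "D \<in> I")
          case True
          show ?thesis
          proof (cases "v = u D")
            case True
            have "{f D, u D} \<in> N D" unfolding N_def using \<open>D \<in> I\<close> by simp
            then show ?thesis using NM True by blast
          next
            case False
            then have "v \<in> D - {u D}" using vD by blast
            then obtain e where "e \<in> MA D" "v \<in> e"
              using goodM_cov[OF MA[rule_format, OF \<open>D \<in> I\<close>]] by blast
            moreover have "MA D \<subseteq> N D" unfolding N_def using \<open>D \<in> I\<close> by auto
            ultimately show ?thesis using NM by blast
          qed
        next
          case False
          then have DI: "D \<in> C - I" using DC by blast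
          have "v \<in> S \<inter> D" using vS vD by blast
          then obtain e where "e \<in> MB D" "v \<in> e"
            using goodM_cov[OF MB[rule_format, OF DI]] by blast
          moreover have "MB D \<subseteq> N D" unfolding N_def using False by auto
          ultimately show ?thesis using NM by blast
        qed
      qed
    qed
    then show ?thesis by blast
  qed
qed

lemma edge_form: "simple_graph V E \<Longrightarrow> e \<in> E \<Longrightarrow> \<exists>a b. e = {a,b} \<and> a \<noteq> b \<and> a \<in> V \<and> b \<in> V"
  unfolding simple_graph_def by blast

lemma cross_form:
  assumes sg: "simple_graph V E" and K: "K \<in> comps E (V - X)"
    and e: "e \<in> E" "e \<inter> K \<noteq> {}" "\<not> e \<subseteq> K"
  shows "\<exists>a b. e = {a,b} \<and> a \<in> K \<and> b \<in> X"
proof -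
  obtain a0 b0 where ab0: "e = {a0,b0}" "a0 \<noteq> b0" "a0 \<in> V" "b0 \<in> V" using edge_form[OF sg e(1)] by blast
  obtain a b where ab: "e = {a,b}" "a \<in> K" "b \<notin> K" "b \<in> V"
  proof (cases "a0 \<in> K")
    case True
    then have "b0 \<notin> K" using e(3) ab0(1) by blast
    then show ?thesis using that ab0 True by blast
  next
    case False
    then have "b0 \<in> K" using e(2) ab0(1) by blast
    moreover have "e = {b0, a0}" using ab0(1) by (simp add: insert_commute)
    ultimately show ?thesis using that ab0 False by blast
  qed
  have KV: "K \<subseteq> V - X" using comps_sub[OF K] .
  have "b \<in> X"
  proof (rule ccontr)
    assume "b \<notin> X"
    then have "(a,b) \<in> adjW E (V - X)" unfolding adjW_def using ab KV e(1) by blast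
    then have "b \<in> K" using comps_closed[OF K ab(2)] by blast
    then show False using ab(3) by blast
  qed
  then show ?thesis using ab by blast
qed

lemma class_bound:
  assumes fin: "finite K" and oK: "odd (card K)"
    and F: "\<And>e. e \<in> F \<Longrightarrow> e \<subseteq> K \<and> card e = 2"
    and dj: "\<And>e f. e \<in> F \<Longrightarrow> f \<in> F \<Longrightarrow> e \<noteq> f \<Longrightarrow> e \<inter> f = {}"
  shows "2 * card F \<le> card K - 1"
proof -
  have FK: "F \<subseteq> Pow K" using F by blast
  have finF: "finite F" using FK fin by (meson finite_Pow_iff finite_subset)
  have "card (\<Union>F) = (\<Sum>e\<in>F. card e)"
  proof (rule card_Union_disjoint)
    show "pairwise disjnt F" unfolding pairwise_def disjnt_def using dj by blast
    show "\<And>e. e \<in> F \<Longrightarrow> finite e" using F fin by (meson finite_subset)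
  qed
  also have "\<dots> = (\<Sum>e\<in>F. 2)" using F by simp
  also have "\<dots> = 2 * card F" by simp
  finally have u: "card (\<Union>F) = 2 * card F" .
  have "\<Union>F \<subseteq> K" using F by blast
  then have "card (\<Union>F) \<le> card K" using fin by (rule card_mono[rotated])
  then show ?thesis using u oK by presburger
qed

lemma cross_big:
  assumes sg: "simple_graph V E" and finE: "finite E"
    and K: "K \<in> comps E (V - X)" and oK: "odd (card K)" and KC: "K \<subseteq> C"
    and degC: "\<And>v. v \<in> C \<Longrightarrow> degree E v = d"
    and col: "proper_edge_coloring (induced_edges E C) d c"
  shows "d \<le> card {e \<in> E. e \<inter> K \<noteq> {} \<and> \<not> e \<subseteq> K}"
proof -
  define cr where "cr = {e \<in> E. e \<inter> K \<noteq> {} \<and> \<not> e \<subseteq> K}"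
  define Ein where "Ein = {e \<in> E. e \<subseteq> K}"
  define EK where "EK = {e \<in> E. e \<inter> K \<noteq> {}}"
  have finV: "finite V" using sg unfolding simple_graph_def by blast
  have KV: "K \<subseteq> V" using comps_sub[OF K] by blast
  have finK: "finite K" using KV finV by (rule finite_subset)
  have Kne: "K \<noteq> {}" using comps_ne[OF K] .
  have card2: "\<And>e. e \<in> E \<Longrightarrow> card e = 2"
  proof -
    fix e assume "e \<in> E"
    then obtain a b where "e = {a,b}" "a \<noteq> b" using edge_form[OF sg] by blast
    then show "card e = 2" by simp
  qed
  have ne: "\<And>e. e \<in> E \<Longrightarrow> e \<noteq> {}" using card2 by fastforce
  have EKu: "EK = Ein \<union> cr"
  proof
    show "EK \<subseteq> Ein \<union> cr" unfolding EK_def Ein_def cr_def by blast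
    show "Ein \<union> cr \<subseteq> EK"
    proof
      fix e assume "e \<in> Ein \<union> cr"
      then show "e \<in> EK"
      proof
        assume "e \<in> Ein"
        then have "e \<in> E" "e \<subseteq> K" unfolding Ein_def by blast+
        then show "e \<in> EK" unfolding EK_def using ne by blast
      next
        assume "e \<in> cr" then show "e \<in> EK" unfolding EK_def cr_def by blast
      qed
    qed
  qed
  have dEK: "Ein \<inter> cr = {}" unfolding Ein_def cr_def by blast
  have finEK: "finite EK" unfolding EK_def using finE by simp
  have finEin: "finite Ein" unfolding Ein_def using finE by simp
  have fincr: "finite cr" unfolding cr_def using finE by simp
  have "(\<Sum>v\<in>K. card {e\<in>EK. v \<in> e}) = (\<Sum>e\<in>EK. card {v\<in>K. v \<in> e})"
    by (rule sum_multicount_gen[OF finK finEK]) simp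
  moreover have "(\<Sum>v\<in>K. card {e\<in>EK. v \<in> e}) = (\<Sum>v\<in>K. degree E v)"
  proof (rule sum.cong[OF refl])
    fix v assume "v \<in> K"
    then have "{e\<in>EK. v \<in> e} = {e\<in>E. v \<in> e}" unfolding EK_def by blast
    then show "card {e\<in>EK. v \<in> e} = degree E v" unfolding degree_def by simp
  qed
  moreover have "(\<Sum>v\<in>K. degree E v) = card K * d"
    using degC KC by (simp add: subset_iff)
  moreover have "(\<Sum>e\<in>EK. card {v\<in>K. v \<in> e}) = (\<Sum>e\<in>Ein. card {v\<in>K. v \<in> e}) + (\<Sum>e\<in>cr. card {v\<in>K. v \<in> e})"
    unfolding EKu by (rule sum.union_disjoint[OF finEin fincr dEK])
  moreover have "(\<Sum>e\<in>Ein. card {v\<in>K. v \<in> e}) = (\<Sum>e\<in>Ein. 2)"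
  proof (rule sum.cong[OF refl])
    fix e assume "e \<in> Ein"
    then have "{v\<in>K. v \<in> e} = e" "e \<in> E" unfolding Ein_def by blast+
    then show "card {v\<in>K. v \<in> e} = 2" using card2 by simp
  qed
  moreover have "(\<Sum>e\<in>cr. card {v\<in>K. v \<in> e}) = (\<Sum>e\<in>cr. 1)"
  proof (rule sum.cong[OF refl])
    fix e assume "e \<in> cr"
    then have "e \<in> E" "e \<inter> K \<noteq> {}" "\<not> e \<subseteq> K" unfolding cr_def by blast+
    then obtain a b where ab: "e = {a,b}" "a \<in> K" "b \<in> X" using cross_form[OF sg K] by blast
    have "b \<notin> K" using ab(3) comps_sub[OF K] by blast
    then have "{v\<in>K. v \<in> e} = {a}" using ab by blast
    then show "card {v\<in>K. v \<in> e} = 1" by simp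
  qed
  ultimately have sumeq: "card K * d = 2 * card Ein + card cr" by simp
  define cls where "cls = (\<lambda>i. {e \<in> Ein. c e = i})"
  have Einsub: "\<And>e. e \<in> Ein \<Longrightarrow> e \<in> induced_edges E C"
    unfolding Ein_def induced_edges_def using KC by blast
  have col1: "\<And>e. e \<in> Ein \<Longrightarrow> c e < d" using col Einsub unfolding proper_edge_coloring_def by blast
  have col2: "\<And>e f. e \<in> Ein \<Longrightarrow> f \<in> Ein \<Longrightarrow> e \<noteq> f \<Longrightarrow> e \<inter> f \<noteq> {} \<Longrightarrow> c e \<noteq> c f"
    using col Einsub unfolding proper_edge_coloring_def by blast
  have EinU: "Ein = (\<Union>i\<in>{..<d}. cls i)" unfolding cls_def using col1 by blast
  have "card Ein \<le> (\<Sum>i\<in>{..<d}. card (cls i))" unfolding EinU by (rule card_UN_le) simp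
  moreover have "\<And>i. 2 * card (cls i) \<le> card K - 1"
  proof -
    fix i
    show "2 * card (cls i) \<le> card K - 1"
    proof (rule class_bound[OF finK oK])
      fix e assume "e \<in> cls i"
      then have "e \<in> Ein" unfolding cls_def by blast
      then show "e \<subseteq> K \<and> card e = 2" unfolding Ein_def using card2 by blast
    next
      fix e f assume "e \<in> cls i" "f \<in> cls i" "e \<noteq> f"
      then show "e \<inter> f = {}" unfolding cls_def using col2 by blast
    qed
  qed
  moreover have "(\<Sum>i\<in>{..<d}. 2 * card (cls i)) = 2 * (\<Sum>i\<in>{..<d}. card (cls i))"
    by (simp add: sum_distrib_left)
  ultimately have "2 * card Ein \<le> (\<Sum>i\<in>{..<d}. 2 * card (cls i))"
    by linarith
  also have "\<dots> \<le> (\<Sum>i\<in>{..<d}. card K - 1)"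
    by (rule sum_mono) (rule \<open>\<And>i. 2 * card (cls i) \<le> card K - 1\<close>)
  also have "\<dots> = d * (card K - 1)" by simp
  finally have inb: "2 * card Ein \<le> d * (card K - 1)" .
  have "card K \<ge> 1" using finK Kne by (simp add: Suc_le_eq card_gt_0_iff)
  then have "card K * d = d * (card K - 1) + d" by (simp add: algebra_simps)
  then show ?thesis using sumeq inb unfolding cr_def by linarith
qed

lemma count_cond:
  assumes sg: "simple_graph V E" and finE: "finite E"
    and degle: "\<And>x. x \<in> V \<Longrightarrow> degree E x \<le> d" and dpos: "1 \<le> d"
    and degC: "\<And>v. v \<in> C \<Longrightarrow> degree E v = d"
    and col: "proper_edge_coloring (induced_edges E C) d c"
    and XV: "X \<subseteq> V"
  shows "oddS E (V - X) C \<le> card X"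
proof -
  define KK where "KK = {K \<in> comps E (V - X). odd (card K) \<and> K \<subseteq> C}"
  define cr where "cr = (\<lambda>K. {e \<in> E. e \<inter> K \<noteq> {} \<and> \<not> e \<subseteq> K})"
  have finV: "finite V" using sg unfolding simple_graph_def by blast
  have finX: "finite X" using XV finV by (rule finite_subset)
  have finKK: "finite KK" unfolding KK_def using comps_finite[of "V - X" E] finV by simp
  have big: "\<And>K. K \<in> KK \<Longrightarrow> d \<le> card (cr K)"
  proof -
    fix K assume "K \<in> KK"
    then have K: "K \<in> comps E (V - X)" "odd (card K)" "K \<subseteq> C" unfolding KK_def by blast+
    show "d \<le> card (cr K)" unfolding cr_def by (rule cross_big[OF sg finE K degC col])
  qed
  have crX: "\<And>K. K \<in> KK \<Longrightarrow> cr K \<subseteq> (\<Union>x\<in>X. {e\<in>E. x \<in> e})"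
  proof
    fix K e assume "K \<in> KK" "e \<in> cr K"
    then have K: "K \<in> comps E (V - X)" and e: "e \<in> E" "e \<inter> K \<noteq> {}" "\<not> e \<subseteq> K"
      unfolding KK_def cr_def by blast+
    obtain a b where "e = {a,b}" "a \<in> K" "b \<in> X" using cross_form[OF sg K e] by blast
    then show "e \<in> (\<Union>x\<in>X. {e\<in>E. x \<in> e})" using e(1) by blast
  qed
  have crdisj: "\<forall>K1\<in>KK. \<forall>K2\<in>KK. K1 \<noteq> K2 \<longrightarrow> cr K1 \<inter> cr K2 = {}"
  proof (intro ballI impI)
    fix K1 K2 assume K12: "K1 \<in> KK" "K2 \<in> KK" "K1 \<noteq> K2"
    then have K1: "K1 \<in> comps E (V - X)" and K2: "K2 \<in> comps E (V - X)" unfolding KK_def by blast+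
    show "cr K1 \<inter> cr K2 = {}"
    proof (rule ccontr)
      assume "cr K1 \<inter> cr K2 \<noteq> {}"
      then obtain e where e1: "e \<in> E" "e \<inter> K1 \<noteq> {}" "\<not> e \<subseteq> K1" and e2: "e \<inter> K2 \<noteq> {}"
        unfolding cr_def by blast
      obtain a b where ab: "e = {a,b}" "a \<in> K1" "b \<in> X" using cross_form[OF sg K1 e1] by blast
      have "b \<notin> K2" using ab(3) comps_sub[OF K2] by blast
      then have "a \<in> K2" using e2 ab(1) by blast
      then have "K1 \<inter> K2 \<noteq> {}" using ab(2) by blast
      then show False using comps_disj[OF K1 K2 K12(3)] by blast
    qed
  qed
  have fincr: "\<forall>K\<in>KK. finite (cr K)" unfolding cr_def using finE by simp
  have "card KK * d \<le> (\<Sum>K\<in>KK. card (cr K))" using sum_bounded_below[of KK d "\<lambda>K. card (cr K)"] big by simp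
  also have "\<dots> = card (\<Union>(cr ` KK))" by (rule card_UN_disjoint[symmetric, OF finKK fincr crdisj])
  also have "\<dots> \<le> card (\<Union>x\<in>X. {e\<in>E. x \<in> e})"
  proof (rule card_mono)
    show "finite (\<Union>x\<in>X. {e\<in>E. x \<in> e})" using finX finE by simp
    show "\<Union>(cr ` KK) \<subseteq> (\<Union>x\<in>X. {e\<in>E. x \<in> e})" using crX by blast
  qed
  also have "\<dots> \<le> (\<Sum>x\<in>X. card {e\<in>E. x \<in> e})" by (rule card_UN_le[OF finX])
  also have "\<dots> = (\<Sum>x\<in>X. degree E x)" unfolding degree_def by simp
  also have "\<dots> \<le> card X * d" using sum_bounded_above[of X "\<lambda>x. degree E x" d] degle XV by (simp add: subset_iff)
  finally have "card KK * d \<le> card X * d" .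
  then have "card KK \<le> card X" using dpos by simp
  then show ?thesis unfolding oddS_def KK_def .
qed

theorem theorem5p2:
  fixes V :: "'a set" and E :: "'a set set"
  assumes "simple_graph V E"
    and "E \<noteq> {}"
    and "\<exists>c. proper_edge_coloring (induced_edges E (core V E)) (max_degree V E) c"
  shows "\<exists>M. matching E M \<and> saturates M (core V E)"
proof -
  note sg = assms(1)
  obtain c where col: "proper_edge_coloring (induced_edges E (core V E)) (max_degree V E) c"
    using assms(3) by blast
  have finV: "finite V" using sg unfolding simple_graph_def by blast
  have EP: "E \<subseteq> Pow V"
  proof
    fix e assume "e \<in> E"
    then obtain a b where "e = {a,b}" "a \<in> V" "b \<in> V" using edge_form[OF sg] by blast
    then show "e \<in> Pow V" by simp
  qed
  have finE: "finite E" using EP by (rule finite_subset) (simp add: finV)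
  have degle: "\<And>x. x \<in> V \<Longrightarrow> degree E x \<le> max_degree V E"
  proof -
    fix x assume "x \<in> V"
    then have "degree E x \<in> degree E ` V" by (rule imageI)
    moreover have "finite (degree E ` V)" using finV by (rule finite_imageI)
    ultimately show "degree E x \<le> max_degree V E" unfolding max_degree_def by (rule Max_ge[rotated])
  qed
  obtain e where e: "e \<in> E" using assms(2) by blast
  obtain a b where ab: "e = {a,b}" "a \<in> V" using edge_form[OF sg e] by blast
  have "{x\<in>E. a \<in> x} \<noteq> {}" using e ab by blast
  then have "degree E a \<ge> 1" unfolding degree_def using finE
    by (simp add: Suc_le_eq card_gt_0_iff)
  then have dpos: "1 \<le> max_degree V E" using degle[OF ab(2)] by linarith
  have degC: "\<And>v. v \<in> core V E \<Longrightarrow> degree E v = max_degree V E" unfolding core_def by simp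
  have CV: "core V E \<subseteq> V" unfolding core_def by (rule Collect_restrict)
  have cond: "\<forall>X\<subseteq>V. oddS E (V - X) (core V E) \<le> card X"
    using count_cond[OF sg finE degle dpos degC col] by blast
  obtain M where M: "goodM E V (core V E) M" using tutteS[OF finV CV cond] by blast
  have "matching E M" unfolding matching_def
  proof
    show "M \<subseteq> E" using goodM_E[OF M] by blast
    show "\<forall>e\<in>M. \<forall>f\<in>M. e \<noteq> f \<longrightarrow> e \<inter> f = {}" using goodM_disj[OF M] by blast
  qed
  moreover have "saturates M (core V E)" unfolding saturates_def using goodM_cov[OF M] by blast
  ultimately show ?thesis by blast
qed

end
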